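(* Let $f$ be a finitary Boolean function. Then for every $k\in\mathbb N$, $I_k(B_nf)\to I_k(f)$ as $n\to\infty$. If moreover $f$ is $p$-knowable for some $p>\tfrac12$, then $H(B_nf)\to H(f)$; and if $f$ is $p$-knowable for some $p>1$, then $I(B_nf)\to I(f)$.
   Context: Let $\Omega=\{-1,1\}$ and $\Omega^\infty=\{-1,1\}^{\mathbb N}$ with the uniform product probability measure; $\omega$ denotes a uniformly random element. A Boolean function is a measurable map $f:\Omega^\infty\to\Omega$. $\omega^{(k)}$ is $\omega$ with bit $k$ flipped; $I_k(f)=\mathbb P(f(\omega^{(k)})\ne f(\omega))$, $I(f)=\sum_kI_k(f)$, $H(f)=\sum_kI_k(f)^2$. A set $W\subseteq\mathbb N$ is a witness set for $f$ at $\omega$ if there is an event $A$ with $\mathbb P(A)=1$ such that for all $\tilde\omega\in A$: if $\tilde\omega_i=\omega_i$ for all $i\in W$ then $f(\tilde\omega)=f(\omega)$. $f$ is finitary if almost surely a finite witness set exists; then $W(f)(\omega)$ denotes the least finite witness set in the order: smaller maximum first, then smaller cardinality, then lexicographic. $f$ is $p$-knowable if it is finitary and $\mathbb E[(\max W(f))^p]<\infty$. $B_nf=\mathbf 1_{\{W(f)\subseteq[n]\}}f-\mathbf 1_{\{W(f)\not\subseteq[n]\}}$. *)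

theory Defs
  imports "HOL-Probability.Probability"
begin

text \<open>Coordinates are indexed by nat = {0,1,2,...}; the paper's [n] = {1..n} corresponds
  to the first n coordinates, i.e. {..<n}.\<close>

definition Omega :: "int set" where
  "Omega = {-1, 1}"

definition M :: "(nat \<Rightarrow> int) measure" where
  "M = PiM UNIV (\<lambda>_. uniform_count_measure Omega)"

definition boolean_function :: "((nat \<Rightarrow> int) \<Rightarrow> int) \<Rightarrow> bool" where
  "boolean_function f \<longleftrightarrow> f \<in> M \<rightarrow>\<^sub>M count_space Omega"

definition flipbit :: "nat \<Rightarrow> (nat \<Rightarrow> int) \<Rightarrow> (nat \<Rightarrow> int)" where
  "flipbit k \<omega> = fun_upd \<omega> k (uminus (\<omega> k))"

definition infl :: "((nat \<Rightarrow> int) \<Rightarrow> int) \<Rightarrow> nat \<Rightarrow> real" where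
  "infl f k = measure M {\<omega> \<in> space M. f (flipbit k \<omega>) \<noteq> f \<omega>}"

definition total_infl :: "((nat \<Rightarrow> int) \<Rightarrow> int) \<Rightarrow> ennreal" where
  "total_infl f = (\<Sum>k. ennreal (infl f k))"

definition H :: "((nat \<Rightarrow> int) \<Rightarrow> int) \<Rightarrow> ennreal" where
  "H f = (\<Sum>k. ennreal ((infl f k)\<^sup>2))"

definition is_witness :: "((nat \<Rightarrow> int) \<Rightarrow> int) \<Rightarrow> (nat \<Rightarrow> int) \<Rightarrow> nat set \<Rightarrow> bool" where
  "is_witness f \<omega> W \<longleftrightarrow>
     (\<exists>A \<in> sets M. emeasure M A = 1 \<and>
        (\<forall>\<omega>' \<in> A. (\<forall>i \<in> W. \<omega>' i = \<omega> i) \<longrightarrow> f \<omega>' = f \<omega>))"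

definition finitary :: "((nat \<Rightarrow> int) \<Rightarrow> int) \<Rightarrow> bool" where
  "finitary f \<longleftrightarrow> (AE \<omega> in M. \<exists>W. finite W \<and> is_witness f \<omega> W)"

definition maxi :: "nat set \<Rightarrow> nat" where
  "maxi A = (if A = {} then 0 else Max A)"

definition set_less :: "nat set \<Rightarrow> nat set \<Rightarrow> bool" where
  "set_less A B \<longleftrightarrow>
     maxi A < maxi B \<or>
     (maxi A = maxi B \<and> (card A < card B \<or>
       (card A = card B \<and>
        (sorted_list_of_set A, sorted_list_of_set B) \<in> lexord {(x, y). x < y})))"

text \<open>Least finite witness set; on the (null) set where no finite witness exists we use
  the convention W = UNIV.\<close>
definition Wf :: "((nat \<Rightarrow> int) \<Rightarrow> int) \<Rightarrow> (nat \<Rightarrow> int) \<Rightarrow> nat set" where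
  "Wf f \<omega> =
     (if \<exists>W. finite W \<and> is_witness f \<omega> W
      then (THE W. finite W \<and> is_witness f \<omega> W \<and>
              (\<forall>V. finite V \<and> is_witness f \<omega> V \<and> V \<noteq> W \<longrightarrow> set_less W V))
      else UNIV)"

definition knowable :: "real \<Rightarrow> ((nat \<Rightarrow> int) \<Rightarrow> int) \<Rightarrow> bool" where
  "knowable p f \<longleftrightarrow> finitary f \<and>
     (\<integral>\<^sup>+ \<omega>. ennreal (real (maxi (Wf f \<omega>)) powr p) \<partial>M) < \<infinity>"

definition B :: "nat \<Rightarrow> ((nat \<Rightarrow> int) \<Rightarrow> int) \<Rightarrow> ((nat \<Rightarrow> int) \<Rightarrow> int)" where
  "B n f = (\<lambda>\<omega>. if Wf f \<omega> \<subseteq> {..<n} then f \<omega> else -1)"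

end

theory Submission
  imports Defs
begin

lemma Omega_fin[simp]: "finite Omega" and Omega_ne[simp]: "Omega \<noteq> {}"
  by (auto simp: Omega_def)

lemma Omega_uminus: "x \<in> Omega \<Longrightarrow> - x \<in> Omega"
  by (auto simp: Omega_def)

abbreviation U where "U \<equiv> uniform_count_measure Omega"

lemma prob_U: "prob_space U"
  by (rule prob_space_uniform_count_measure) auto

interpretation M: prob_space M
  unfolding M_def by (rule prob_space_PiM) (rule prob_U)

lemma space_M: "space M = {\<omega>. \<forall>i. \<omega> i \<in> Omega}"
  by (auto simp: M_def space_PiM space_uniform_count_measure PiE_def extensional_def)

lemma sets_M: "sets M = sets (PiM UNIV (\<lambda>_. U))"
  by (simp add: M_def)

lemma meas_coord[measurable]: "(\<lambda>\<omega>. \<omega> i) \<in> M \<rightarrow>\<^sub>M count_space Omega"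
proof -
  have "(\<lambda>\<omega>. \<omega> i) \<in> M \<rightarrow>\<^sub>M U" unfolding M_def by measurable
  then show ?thesis by (simp add: measurable_def space_uniform_count_measure sets_uniform_count_measure)
qed

lemma flip_meas[measurable]: "flipbit k \<in> M \<rightarrow>\<^sub>M M"
  unfolding M_def
proof (rule measurable_PiM_single')
  fix i
  show "(\<lambda>\<omega>. flipbit k \<omega> i) \<in> PiM UNIV (\<lambda>_. U) \<rightarrow>\<^sub>M U"
  proof (cases "i = k")
    case True
    have "(\<lambda>\<omega>. flipbit k \<omega> i) = (\<lambda>x. - x) \<circ> (\<lambda>\<omega>. \<omega> k)" by (auto simp: flipbit_def True)
    moreover have "(\<lambda>x::int. - x) \<in> U \<rightarrow>\<^sub>M U"
      by (auto simp: measurable_def space_uniform_count_measure sets_uniform_count_measure Omega_uminus)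
    ultimately show ?thesis by (metis measurable_comp measurable_component_singleton UNIV_I)
  next
    case False
    then show ?thesis by (auto simp: flipbit_def)
  qed
next
  show "flipbit k \<in> space (PiM UNIV (\<lambda>_. U)) \<rightarrow> (\<Pi>\<^sub>E i\<in>UNIV. space U)"
    by (auto simp: flipbit_def space_PiM space_uniform_count_measure Omega_uminus PiE_def extensional_def Pi_iff)
qed

lemma flip_flip[simp]: "flipbit k (flipbit k \<omega>) = \<omega>"
  by (auto simp: flipbit_def)

lemma flip_other[simp]: "i \<noteq> k \<Longrightarrow> flipbit k \<omega> i = \<omega> i"
  by (auto simp: flipbit_def)

lemma flip_space: "\<omega> \<in> space M \<Longrightarrow> flipbit k \<omega> \<in> space M"
  using measurable_space[OF flip_meas] by auto

lemma U_uminus: assumes "X \<subseteq> Omega" shows "emeasure U (uminus ` X) = emeasure U X"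
proof -
  have "uminus ` X \<subseteq> Omega" using assms Omega_uminus by auto
  moreover have "card (uminus ` X) = card X" by (rule card_image) (auto simp: inj_on_def)
  ultimately show ?thesis using assms by (simp add: emeasure_uniform_count_measure)
qed

lemma distr_flip: "distr M M (flipbit k) = M"
  unfolding M_def
proof (rule measure_eqI_PiM_infinite[symmetric])
  show "finite_measure (PiM (UNIV::nat set) (\<lambda>_. U))" using M.finite_measure_axioms unfolding M_def .
  fix A J assume J: "finite J" "J \<subseteq> (UNIV::nat set)" and A: "\<And>i. i \<in> J \<Longrightarrow> A i \<in> sets U"
  define A' where "A' i = (if i = k then uminus ` A k else A i)" for i
  have AO: "i \<in> J \<Longrightarrow> A i \<subseteq> Omega" for i using A by (auto simp: sets_uniform_count_measure)
  have A': "i \<in> J \<Longrightarrow> A' i \<in> sets U" for i using AO Omega_uminus by (auto simp: A'_def sets_uniform_count_measure)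
  have pre: "flipbit k -` prod_emb UNIV (\<lambda>_. U) J (Pi\<^sub>E J A) \<inter> space (PiM UNIV (\<lambda>_. U))
      = prod_emb UNIV (\<lambda>_. U) J (Pi\<^sub>E J A')"
  proof (intro set_eqI iffI)
    fix \<omega> assume h: "\<omega> \<in> flipbit k -` prod_emb UNIV (\<lambda>_. U) J (Pi\<^sub>E J A) \<inter> space (PiM UNIV (\<lambda>_. U))"
    then have "\<forall>i\<in>J. flipbit k \<omega> i \<in> A i" "\<omega> \<in> space (PiM UNIV (\<lambda>_. U))"
      by (auto simp: prod_emb_iff PiE_iff)
    then show "\<omega> \<in> prod_emb UNIV (\<lambda>_. U) J (Pi\<^sub>E J A')"
      apply (auto simp: prod_emb_iff PiE_iff A'_def space_PiM)
      by (metis flip_flip flip_other image_eqI flipbit_def fun_upd_same minus_minus)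
  next
    fix \<omega> assume h: "\<omega> \<in> prod_emb UNIV (\<lambda>_. U) J (Pi\<^sub>E J A')"
    then have "\<forall>i\<in>J. \<omega> i \<in> A' i" "\<omega> \<in> space (PiM UNIV (\<lambda>_. U))"
      by (auto simp: prod_emb_iff PiE_iff space_PiM)
    moreover then have "flipbit k \<omega> \<in> space (PiM UNIV (\<lambda>_. U))"
      using flip_space[of \<omega> k] by (simp add: M_def)
    ultimately show "\<omega> \<in> flipbit k -` prod_emb UNIV (\<lambda>_. U) J (Pi\<^sub>E J A) \<inter> space (PiM UNIV (\<lambda>_. U))"
      by (auto simp: prod_emb_iff PiE_iff A'_def space_PiM flipbit_def split: if_splits)
  qed
  have "emeasure (distr (PiM UNIV (\<lambda>_. U)) (PiM UNIV (\<lambda>_. U)) (flipbit k)) (prod_emb UNIV (\<lambda>_. U) J (Pi\<^sub>E J A))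
     = emeasure (PiM UNIV (\<lambda>_. U)) (prod_emb UNIV (\<lambda>_. U) J (Pi\<^sub>E J A'))"
    using J A flip_meas[of k] by (subst emeasure_distr) (auto simp: M_def pre intro!: sets_PiM_I)
  also have "\<dots> = (\<Prod>i\<in>J. emeasure U (A' i))"
    using J A' prob_U by (intro emeasure_PiM_emb) auto
  also have "\<dots> = (\<Prod>i\<in>J. emeasure U (A i))"
    using AO by (intro prod.cong) (auto simp: A'_def U_uminus)
  also have "\<dots> = emeasure (PiM UNIV (\<lambda>_. U)) (prod_emb UNIV (\<lambda>_. U) J (Pi\<^sub>E J A))"
    using J A prob_U by (intro emeasure_PiM_emb[symmetric]) auto
  finally show "emeasure (PiM UNIV (\<lambda>_. U)) (prod_emb UNIV (\<lambda>_. U) J (Pi\<^sub>E J A)) =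
     emeasure (distr (PiM UNIV (\<lambda>_. U)) (PiM UNIV (\<lambda>_. U)) (flipbit k)) (prod_emb UNIV (\<lambda>_. U) J (Pi\<^sub>E J A))"
    by (rule sym)
qed simp_all

section \<open>The order set_less\<close>

lemma lexnat_irrefl: "(xs, xs) \<notin> lexord {(x, y::nat). x < y}"
  by (rule lexord_irreflexive) auto

lemma lexnat_trans: "(xs, ys) \<in> lexord {(x, y::nat). x < y} \<Longrightarrow> (ys, zs) \<in> lexord {(x, y). x < y}
   \<Longrightarrow> (xs, zs) \<in> lexord {(x, y). x < y}"
  by (rule lexord_trans) (auto simp: trans_def)

lemma lexnat_total: "xs \<noteq> ys \<Longrightarrow> (xs, ys) \<in> lexord {(x, y::nat). x < y} \<or> (ys, xs) \<in> lexord {(x, y). x < y}"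
proof -
  have "total {(x, y::nat). x < y}" unfolding total_on_def by auto
  then have "total (lexord {(x, y::nat). x < y})" by (rule total_lexord)
  then show "xs \<noteq> ys \<Longrightarrow> ?thesis" unfolding total_on_def by blast
qed

lemma set_less_irrefl: "\<not> set_less A A"
  using lexnat_irrefl by (auto simp: set_less_def)

lemma set_less_trans: "set_less X Y \<Longrightarrow> set_less Y Z \<Longrightarrow> set_less X Z"
  unfolding set_less_def using lexnat_trans[of "sorted_list_of_set X" "sorted_list_of_set Y" "sorted_list_of_set Z"]
  by (elim disjE conjE) auto

lemma set_less_total: "finite A \<Longrightarrow> finite Y \<Longrightarrow> A \<noteq> Y \<Longrightarrow> set_less A Y \<or> set_less Y A"
proof -
  assume fA: "finite A" and fB: "finite Y" and ne: "A \<noteq> Y"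
  then have "sorted_list_of_set A \<noteq> sorted_list_of_set Y"
    by (metis sorted_list_of_set.set_sorted_key_list_of_set)
  then show ?thesis using lexnat_total unfolding set_less_def by (metis linorder_neqE_nat)
qed

lemma maxi_bound: "finite A \<Longrightarrow> A \<subseteq> {..maxi A}"
  by (auto simp: maxi_def)

lemma set_less_maxi: "set_less A Y \<Longrightarrow> maxi A \<le> maxi Y"
  by (auto simp: set_less_def)

lemma exists_least:
  assumes ex: "\<exists>W. finite W \<and> P W"
  shows "\<exists>W. finite W \<and> P W \<and> (\<forall>V. finite V \<and> P V \<and> V \<noteq> W \<longrightarrow> set_less W V)"
proof -
  define m where "m = (LEAST m. \<exists>W. finite W \<and> P W \<and> maxi W = m)"
  have "\<exists>W. finite W \<and> P W \<and> maxi W = m"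
    unfolding m_def by (rule LeastI_ex) (use ex in auto)
  define C where "C = {W. finite W \<and> P W \<and> maxi W = m}"
  have Cne: "C \<noteq> {}" using \<open>\<exists>W. finite W \<and> P W \<and> maxi W = m\<close> by (auto simp: C_def)
  have Csub: "C \<subseteq> Pow {..m}" unfolding C_def using maxi_bound by auto
  then have fC: "finite C" by (rule finite_subset) simp
  define r where "r = {(V, W). V \<in> C \<and> W \<in> C \<and> set_less V W}"
  have "r \<subseteq> C \<times> C" by (auto simp: r_def)
  then have "finite r" using fC by (meson finite_SigmaI finite_subset)
  moreover have "acyclic r"
  proof -
    have "trans r" unfolding r_def trans_def using set_less_trans by blast
    then have "r\<^sup>+ = r" by (rule trancl_id)
    then show ?thesis unfolding acyclic_def using set_less_irrefl by (simp add: r_def)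
  qed
  ultimately have "wf r" by (rule finite_acyclic_wf)
  then obtain W where W: "W \<in> C" and min: "\<And>V. (V, W) \<in> r \<Longrightarrow> V \<notin> C"
    using Cne by (metis wfE_min all_not_in_conv)
  have "\<forall>V. finite V \<and> P V \<and> V \<noteq> W \<longrightarrow> set_less W V"
  proof (intro allI impI)
    fix V assume V: "finite V \<and> P V \<and> V \<noteq> W"
    have "m \<le> maxi V" unfolding m_def by (rule Least_le) (use V in auto)
    show "set_less W V"
    proof (cases "maxi V = m")
      case True
      then have "V \<in> C" using V by (auto simp: C_def)
      then have "(V, W) \<notin> r" using min by blast
      then have "\<not> set_less V W" using \<open>V \<in> C\<close> W by (simp add: r_def)
      then show ?thesis using set_less_total[of W V] V W by (auto simp: C_def)
    next
      case False
      then show ?thesis using \<open>m \<le> maxi V\<close> W by (auto simp: set_less_def C_def)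
    qed
  qed
  then show ?thesis using W by (auto simp: C_def)
qed

lemma Wf_least:
  assumes ex: "\<exists>W. finite W \<and> is_witness f \<omega> W"
  shows "finite (Wf f \<omega>) \<and> is_witness f \<omega> (Wf f \<omega>) \<and>
     (\<forall>V. finite V \<and> is_witness f \<omega> V \<and> V \<noteq> Wf f \<omega> \<longrightarrow> set_less (Wf f \<omega>) V)"
proof -
  let ?Q = "\<lambda>W. finite W \<and> is_witness f \<omega> W \<and>
              (\<forall>V. finite V \<and> is_witness f \<omega> V \<and> V \<noteq> W \<longrightarrow> set_less W V)"
  obtain W0 where W0: "?Q W0" using exists_least[OF ex] by blast
  have uniq: "W1 = W2" if "?Q W1" "?Q W2" for W1 W2
  proof (rule ccontr)
    assume "W1 \<noteq> W2"
    then have "set_less W1 W2" "set_less W2 W1" using that by auto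
    then show False using set_less_trans set_less_irrefl by metis
  qed
  have "?Q (THE W. ?Q W)" by (rule theI[of ?Q W0]) (use W0 uniq in blast)+
  then show ?thesis using ex unfolding Wf_def by simp
qed

section \<open>Witnesses and measurability\<close>

lemma msub: "A \<in> sets M \<Longrightarrow> X \<in> sets M \<Longrightarrow> measure M (A \<union> X) \<le> measure M A + measure M X"
  by (rule measure_subadditive) (auto simp: M.emeasure_finite)

lemma AE_flip: "AE \<omega> in M. P \<omega> \<Longrightarrow> AE \<omega> in M. P (flipbit k \<omega>)"
  by (metis AE_distrD flip_meas distr_flip)

lemma measure_flip: "X \<in> sets M \<Longrightarrow> measure M (flipbit k -` X \<inter> space M) = measure M X"
  using measure_distr[OF flip_meas, of X k] by (simp add: distr_flip)

lemma wit_depends: "is_witness f \<omega> W \<Longrightarrow> (\<forall>i\<in>W. \<omega>' i = \<omega> i) \<Longrightarrow> f \<omega>' = f \<omega> \<Longrightarrow> is_witness f \<omega>' W"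
  unfolding is_witness_def by auto

lemma wit_iff: "is_witness f \<omega> W \<longleftrightarrow> (AE \<omega>' in M. (\<forall>i\<in>W. \<omega>' i = \<omega> i) \<longrightarrow> f \<omega>' = f \<omega>)"
proof
  assume "is_witness f \<omega> W"
  then obtain A where A: "A \<in> sets M" "emeasure M A = 1"
    "\<forall>\<omega>'\<in>A. (\<forall>i\<in>W. \<omega>' i = \<omega> i) \<longrightarrow> f \<omega>' = f \<omega>"
    unfolding is_witness_def by blast
  have "M.prob A = 1" using A by (simp add: M.emeasure_eq_measure)
  then have "AE \<omega>' in M. \<omega>' \<in> A" by (rule M.AE_prob_1)
  then show "AE \<omega>' in M. (\<forall>i\<in>W. \<omega>' i = \<omega> i) \<longrightarrow> f \<omega>' = f \<omega>"
    by (rule eventually_mono) (use A in blast)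
next
  assume "AE \<omega>' in M. (\<forall>i\<in>W. \<omega>' i = \<omega> i) \<longrightarrow> f \<omega>' = f \<omega>"
  then obtain N where N: 
    "{\<omega>'\<in>space M. \<not> ((\<forall>i\<in>W. \<omega>' i = \<omega> i) \<longrightarrow> f \<omega>' = f \<omega>)} \<subseteq> N"
    "emeasure M N = 0" "N \<in> sets M"
    by (rule AE_E)
  have Ns: "N \<in> sets M" using N by auto
  have "M.prob (space M - N) = 1" using M.prob_compl[OF Ns] N by (simp add: M.emeasure_eq_measure)
  then have "emeasure M (space M - N) = 1" by (simp add: M.emeasure_eq_measure)
  moreover have "space M - N \<in> sets M" using Ns by auto
  ultimately show "is_witness f \<omega> W" unfolding is_witness_def using N(1)
    by (intro bexI[of _ "space M - N"]) auto
qed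

definition Pat :: "((nat \<Rightarrow> int) \<Rightarrow> int) \<Rightarrow> nat set \<Rightarrow> ((nat \<Rightarrow> int) \<times> int) set" where
  "Pat f W = {p \<in> (\<Pi>\<^sub>E i\<in>W. Omega) \<times> Omega. AE \<omega>' in M. (\<forall>i\<in>W. \<omega>' i = fst p i) \<longrightarrow> f \<omega>' = snd p}"

lemma Pat_fin: "finite W \<Longrightarrow> finite (Pat f W)"
proof -
  assume "finite W"
  then have "finite ((\<Pi>\<^sub>E i\<in>W. Omega) \<times> Omega)" by (intro finite_SigmaI finite_PiE) auto
  then show ?thesis unfolding Pat_def by (rule finite_subset[rotated]) auto
qed

definition Gs :: "((nat \<Rightarrow> int) \<Rightarrow> int) \<Rightarrow> nat \<Rightarrow> (nat \<Rightarrow> int) set" where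
  "Gs f n = {\<omega> \<in> space M. \<exists>V \<subseteq> {..<n}. is_witness f \<omega> V}"

lemma Gs_mono: "m \<le> n \<Longrightarrow> Gs f m \<subseteq> Gs f n"
  unfolding Gs_def by auto (meson lessThan_subset_iff order_trans)

context
  fixes f :: "(nat \<Rightarrow> int) \<Rightarrow> int"
  assumes fm[measurable]: "f \<in> M \<rightarrow>\<^sub>M count_space Omega"
begin

lemma f_space: "\<omega> \<in> space M \<Longrightarrow> f \<omega> \<in> Omega"
  using measurable_space[OF fm] by auto

lemma pat_in: "\<omega> \<in> space M \<Longrightarrow> is_witness f \<omega> W \<Longrightarrow> (restrict \<omega> W, f \<omega>) \<in> Pat f W"
  unfolding Pat_def wit_iff using f_space by (auto simp: space_M)

lemma cyl_sets: "finite W \<Longrightarrow> {\<omega> \<in> space M. (\<forall>i\<in>W. \<omega> i = x i) \<and> f \<omega> = v} \<in> sets M"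
  by measurable

lemma wit_sets: assumes fin: "finite W" shows "{\<omega> \<in> space M. is_witness f \<omega> W} \<in> sets M"
proof -
  have "{\<omega> \<in> space M. is_witness f \<omega> W} =
     (\<Union>p\<in>Pat f W. {\<omega> \<in> space M. (\<forall>i\<in>W. \<omega> i = fst p i) \<and> f \<omega> = snd p})"
  proof (intro set_eqI iffI)
    fix \<omega> assume "\<omega> \<in> {\<omega> \<in> space M. is_witness f \<omega> W}"
    then show "\<omega> \<in> (\<Union>p\<in>Pat f W. {\<omega> \<in> space M. (\<forall>i\<in>W. \<omega> i = fst p i) \<and> f \<omega> = snd p})"
      using pat_in[of \<omega>] by (intro UN_I[of "(restrict \<omega> W, f \<omega>)"]) auto
  next
    fix \<omega> assume "\<omega> \<in> (\<Union>p\<in>Pat f W. {\<omega> \<in> space M. (\<forall>i\<in>W. \<omega> i = fst p i) \<and> f \<omega> = snd p})"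
    then obtain x v where "(x, v) \<in> Pat f W" "\<omega> \<in> space M" "\<forall>i\<in>W. \<omega> i = x i" "f \<omega> = v" by auto
    then show "\<omega> \<in> {\<omega> \<in> space M. is_witness f \<omega> W}"
      unfolding Pat_def wit_iff by auto
  qed
  also have "\<dots> \<in> sets M" using Pat_fin[OF fin] fin cyl_sets by auto
  finally show ?thesis .
qed

lemma K: assumes fin: "finite W" and k: "k \<notin> W"
  shows "AE \<omega> in M. is_witness f \<omega> W \<longrightarrow> f (flipbit k \<omega>) = f \<omega>"
proof -
  have "AE \<omega> in M. (\<forall>i\<in>W. \<omega> i = fst p i) \<longrightarrow> f (flipbit k \<omega>) = snd p" if p: "p \<in> Pat f W" for p
  proof -
    have "AE \<omega>' in M. (\<forall>i\<in>W. \<omega>' i = fst p i) \<longrightarrow> f \<omega>' = snd p" using p by (auto simp: Pat_def)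
    then have "AE \<omega> in M. (\<forall>i\<in>W. flipbit k \<omega> i = fst p i) \<longrightarrow> f (flipbit k \<omega>) = snd p" by (rule AE_flip)
    moreover have "i \<in> W \<Longrightarrow> flipbit k \<omega> i = \<omega> i" for i \<omega> using k by (metis flip_other)
    ultimately show ?thesis by simp
  qed
  then have "AE \<omega> in M. \<forall>p\<in>Pat f W. (\<forall>i\<in>W. \<omega> i = fst p i) \<longrightarrow> f (flipbit k \<omega>) = snd p"
    using Pat_fin[OF fin] by (simp add: eventually_ball_finite)
  then show ?thesis
  proof (rule AE_mp[OF _ AE_I2], intro impI)
    fix \<omega> assume "\<omega> \<in> space M" "\<forall>p\<in>Pat f W. (\<forall>i\<in>W. \<omega> i = fst p i) \<longrightarrow> f (flipbit k \<omega>) = snd p"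
      "is_witness f \<omega> W"
    then show "f (flipbit k \<omega>) = f \<omega>" using pat_in[of \<omega> W] by fastforce
  qed
qed

lemma Gs_sets: "Gs f n \<in> sets M"
proof -
  have "Gs f n = (\<Union>V\<in>Pow {..<n}. {\<omega> \<in> space M. is_witness f \<omega> V})" by (auto simp: Gs_def)
  also have "\<dots> \<in> sets M" by (intro sets.finite_UN) (auto intro: wit_sets finite_subset)
  finally show ?thesis .
qed

lemma D_sets: assumes [measurable]: "g \<in> M \<rightarrow>\<^sub>M count_space Omega"
  shows "{\<omega> \<in> space M. g (flipbit k \<omega>) \<noteq> g \<omega>} \<in> sets M"
proof -
  have "id \<in> count_space Omega \<rightarrow>\<^sub>M count_space UNIV" by simp
  then have "id \<circ> g \<in> M \<rightarrow>\<^sub>M count_space UNIV" using assms by (rule measurable_comp[rotated])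
  then have [measurable]: "g \<in> M \<rightarrow>\<^sub>M count_space UNIV" by simp
  show ?thesis by measurable
qed

lemma set_less_empty: "finite A \<Longrightarrow> \<not> set_less A {}"
  by (auto simp: set_less_def maxi_def)

lemma B_char: assumes "\<omega> \<in> space M" shows "B n f \<omega> = (if \<omega> \<in> Gs f n then f \<omega> else -1)"
proof -
  have "Wf f \<omega> \<subseteq> {..<n} \<longleftrightarrow> (\<exists>V\<subseteq>{..<n}. is_witness f \<omega> V)"
  proof (cases "\<exists>W. finite W \<and> is_witness f \<omega> W")
    case False
    then have "Wf f \<omega> = UNIV" unfolding Wf_def by (intro if_not_P)
    moreover have "\<not> (\<exists>V\<subseteq>{..<n}. is_witness f \<omega> V)" using False finite_subset by blast
    ultimately show ?thesis by auto
  next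
    case True
    note L = Wf_least[OF True]
    show ?thesis
    proof
      assume "Wf f \<omega> \<subseteq> {..<n}" then show "\<exists>V\<subseteq>{..<n}. is_witness f \<omega> V" using L by blast
    next
      assume "\<exists>V\<subseteq>{..<n}. is_witness f \<omega> V"
      then obtain V where V: "V \<subseteq> {..<n}" "is_witness f \<omega> V" by blast
      have fV: "finite V" using V finite_subset by blast
      show "Wf f \<omega> \<subseteq> {..<n}"
      proof (cases "V = Wf f \<omega>")
        case True then show ?thesis using V by simp
      next
        case False
        then have sl: "set_less (Wf f \<omega>) V" using L V fV by blast
        show ?thesis
        proof (cases "V = {}")
          case True
          then show ?thesis using sl L set_less_empty by auto
        next
          case False
          then have "maxi V < n" using V fV by (auto simp: maxi_def)
          moreover have "maxi (Wf f \<omega>) \<le> maxi V" using sl by (rule set_less_maxi)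
          moreover have "Wf f \<omega> \<subseteq> {..maxi (Wf f \<omega>)}" using L maxi_bound by blast
          ultimately show ?thesis by auto
        qed
      qed
    qed
  qed
  then show ?thesis using assms by (simp add: B_def Gs_def)
qed

lemma bad_maxi: assumes "\<exists>W. finite W \<and> is_witness f \<omega> W" "\<omega> \<notin> Gs f n" "\<omega> \<in> space M"
  shows "n \<le> maxi (Wf f \<omega>)"
proof (rule ccontr)
  assume "\<not> n \<le> maxi (Wf f \<omega>)"
  moreover note L = Wf_least[OF assms(1)]
  moreover have "Wf f \<omega> \<subseteq> {..maxi (Wf f \<omega>)}" using L maxi_bound by blast
  ultimately have "Wf f \<omega> \<subseteq> {..<n}" by auto
  then show False using assms L by (auto simp: Gs_def)
qed

lemma B_meas: "B n f \<in> M \<rightarrow>\<^sub>M count_space Omega"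
proof -
  have "(\<lambda>\<omega>. if \<omega> \<in> Gs f n then f \<omega> else -1) \<in> M \<rightarrow>\<^sub>M count_space Omega"
    using Gs_sets[of n] by (intro measurable_If_set fm measurable_const) (auto simp: Omega_def)
  then show ?thesis by (rule measurable_cong[THEN iffD1, rotated]) (simp add: B_char)
qed

definition "eps n = measure M (space M - Gs f n)"

lemma eps_nonneg: "0 \<le> eps n" by (simp add: eps_def)

lemma eps_mono: "m \<le> n \<Longrightarrow> eps n \<le> eps m"
  unfolding eps_def using Gs_mono[of m n f] Gs_sets[of m]
  by (intro M.finite_measure_mono) auto

lemma infl_diff: "\<bar>infl (B n f) k - infl f k\<bar> \<le> 2 * eps n"
proof -
  define D1 where "D1 = {\<omega> \<in> space M. B n f (flipbit k \<omega>) \<noteq> B n f \<omega>}"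
  define D2 where "D2 = {\<omega> \<in> space M. f (flipbit k \<omega>) \<noteq> f \<omega>}"
  define E where "E = space M - Gs f n"
  define E' where "E' = flipbit k -` E \<inter> space M"
  have s: "D1 \<in> sets M" "D2 \<in> sets M" "E \<in> sets M" "E' \<in> sets M"
    using D_sets[OF B_meas] D_sets[OF fm] Gs_sets flip_meas
    by (auto simp: D1_def D2_def E_def E'_def)
  have mE': "measure M E' = measure M E" unfolding E'_def by (rule measure_flip) (use s in auto)
  have eq: "\<omega> \<in> space M \<Longrightarrow> \<omega> \<notin> E \<Longrightarrow> \<omega> \<notin> E' \<Longrightarrow>
      B n f (flipbit k \<omega>) = f (flipbit k \<omega>) \<and> B n f \<omega> = f \<omega>" for \<omega>
    using B_char flip_space by (auto simp: E_def E'_def)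
  have sub1: "D1 \<subseteq> D2 \<union> E \<union> E'" using eq by (auto simp: D1_def D2_def)
  have sub2: "D2 \<subseteq> D1 \<union> E \<union> E'" using eq by (auto simp: D1_def D2_def)
  have "measure M D1 \<le> measure M (D2 \<union> E \<union> E')" using sub1 s by (intro M.finite_measure_mono) auto
  also have "\<dots> \<le> measure M D2 + measure M E + measure M E'"
    using s by (meson msub add_mono order_trans order_refl sets.Un)
  finally have 1: "measure M D1 \<le> measure M D2 + 2 * measure M E" using mE' by simp
  have "measure M D2 \<le> measure M (D1 \<union> E \<union> E')" using sub2 s by (intro M.finite_measure_mono) auto
  also have "\<dots> \<le> measure M D1 + measure M E + measure M E'"
    using s by (meson msub add_mono order_trans order_refl sets.Un)
  finally have 2: "measure M D2 \<le> measure M D1 + 2 * measure M E" using mE' by simp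
  show ?thesis using 1 2 unfolding infl_def eps_def D1_def[symmetric] D2_def[symmetric] E_def[symmetric]
    by linarith
qed

lemma AG: assumes "n \<le> k"
  shows "AE \<omega> in M. \<omega> \<in> Gs f n \<longrightarrow> f (flipbit k \<omega>) = f \<omega> \<and> flipbit k \<omega> \<in> Gs f n"
proof -
  have "AE \<omega> in M. \<forall>V\<in>Pow {..<n}. is_witness f \<omega> V \<longrightarrow> f (flipbit k \<omega>) = f \<omega>"
  proof (rule eventually_ball_finite)
    show "\<forall>V\<in>Pow {..<n}. AE \<omega> in M. is_witness f \<omega> V \<longrightarrow> f (flipbit k \<omega>) = f \<omega>"
    proof
      fix V assume V: "V \<in> Pow {..<n}"
      then have "finite V" by (meson PowD finite_lessThan finite_subset)
      moreover have "k \<notin> V" using V assms by auto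
      ultimately show "AE \<omega> in M. is_witness f \<omega> V \<longrightarrow> f (flipbit k \<omega>) = f \<omega>" by (rule K)
    qed
  qed simp
  then show ?thesis
  proof (rule AE_mp[OF _ AE_I2], intro impI)
    fix \<omega> assume sp: "\<omega> \<in> space M" and H: "\<forall>V\<in>Pow {..<n}. is_witness f \<omega> V \<longrightarrow> f (flipbit k \<omega>) = f \<omega>"
      and G: "\<omega> \<in> Gs f n"
    then obtain V where V: "V \<subseteq> {..<n}" "is_witness f \<omega> V" by (auto simp: Gs_def)
    then have eqf: "f (flipbit k \<omega>) = f \<omega>" using H by auto
    have "\<forall>i\<in>V. flipbit k \<omega> i = \<omega> i" using V assms by auto
    then have "is_witness f (flipbit k \<omega>) V" using wit_depends V eqf by blast
    then have "flipbit k \<omega> \<in> Gs f n" using V flip_space sp by (auto simp: Gs_def)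
    then show "f (flipbit k \<omega>) = f \<omega> \<and> flipbit k \<omega> \<in> Gs f n" using eqf by simp
  qed
qed

lemma infl_zero: assumes "n \<le> k" shows "infl (B n f) k = 0"
proof -
  define D1 where "D1 = {\<omega> \<in> space M. B n f (flipbit k \<omega>) \<noteq> B n f \<omega>}"
  have s: "D1 \<in> sets M" using D_sets[OF B_meas] by (simp add: D1_def)
  have "AE \<omega> in M. B n f (flipbit k \<omega>) = B n f \<omega>"
    using AG[OF assms] AE_flip[OF AG[OF assms], of k] AE_space
  proof (eventually_elim)
    case (elim \<omega>)
    then have sp: "\<omega> \<in> space M" by simp
    have sp': "flipbit k \<omega> \<in> space M" using sp by (rule flip_space)
    show ?case
    proof (cases "\<omega> \<in> Gs f n")
      case True
      then show ?thesis using elim B_char[OF sp] B_char[OF sp'] by auto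
    next
      case False
      then have "flipbit k \<omega> \<notin> Gs f n" using elim by auto
      then show ?thesis using False B_char[OF sp] B_char[OF sp'] by auto
    qed
  qed
  then have "emeasure M D1 = 0" using AE_iff_measurable[OF s, of "\<lambda>\<omega>. B n f (flipbit k \<omega>) = B n f \<omega>"]
    by (simp add: D1_def)
  then show ?thesis by (simp add: infl_def D1_def[symmetric] measure_def)
qed

lemma infl_f_le: "infl f k \<le> eps k"
proof -
  define D2 where "D2 = {\<omega> \<in> space M. f (flipbit k \<omega>) \<noteq> f \<omega>}"
  have s: "D2 \<inter> Gs f k \<in> sets M" "space M - Gs f k \<in> sets M" using D_sets[OF fm] Gs_sets by (auto simp: D2_def)
  have "AE \<omega> in M. \<omega> \<notin> D2 \<inter> Gs f k" using AG[OF order_refl] by eventually_elim (auto simp: D2_def)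
  then have "emeasure M (D2 \<inter> Gs f k) = 0" using AE_iff_measurable[OF s(1), of "\<lambda>\<omega>. \<omega> \<notin> D2 \<inter> Gs f k"]
    using sets.sets_into_space[OF s(1)] by auto
  then have z: "measure M (D2 \<inter> Gs f k) = 0" by (simp add: measure_def)
  have "measure M D2 \<le> measure M ((D2 \<inter> Gs f k) \<union> (space M - Gs f k))"
    using s by (intro M.finite_measure_mono) (auto simp: D2_def)
  also have "\<dots> \<le> measure M (D2 \<inter> Gs f k) + measure M (space M - Gs f k)"
    using s by (rule msub)
  finally show ?thesis using z by (simp add: infl_def eps_def D2_def)
qed

lemma eps_lim: assumes fin: "finitary f" shows "eps \<longlonglongrightarrow> 0"
proof -
  have r: "range (Gs f) \<subseteq> sets M" using Gs_sets by auto
  have inc: "incseq (Gs f)" using Gs_mono by (auto simp: incseq_def)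
  have L: "(\<lambda>n. measure M (Gs f n)) \<longlonglongrightarrow> measure M (\<Union>n. Gs f n)"
    by (rule M.finite_Lim_measure_incseq[OF r inc])
  have U: "(\<Union>n. Gs f n) \<in> sets M" using r by auto
  have "AE \<omega> in M. \<omega> \<in> (\<Union>n. Gs f n)"
    using fin[unfolded finitary_def] AE_space
  proof eventually_elim
    case (elim \<omega>)
    then obtain W where W: "finite W" "is_witness f \<omega> W" by auto
    then obtain n where "W \<subseteq> {..<n}" using finite_nat_bounded by blast
    then show ?case using W elim by (auto simp: Gs_def)
  qed
  then have "measure M (\<Union>n. Gs f n) = 1" using M.AE_in_set_eq_1[OF U] by simp
  then have "(\<lambda>n. 1 - measure M (Gs f n)) \<longlonglongrightarrow> 1 - 1" using L by (intro tendsto_diff) auto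
  moreover have "eps = (\<lambda>n. 1 - measure M (Gs f n))"
    unfolding eps_def using M.prob_compl[OF Gs_sets] by (intro ext) simp
  ultimately show ?thesis by simp
qed

lemma markov: assumes kn: "knowable p f" and p: "0 < p" and n: "0 < n"
  shows "eps n \<le> enn2real (\<integral>\<^sup>+\<omega>. ennreal (real (maxi (Wf f \<omega>)) powr p) \<partial>M) * real n powr (-p)"
proof -
  define I where "I = (\<integral>\<^sup>+\<omega>. ennreal (real (maxi (Wf f \<omega>)) powr p) \<partial>M)"
  have finI: "I < \<infinity>" and AEf: "AE \<omega> in M. \<exists>W. finite W \<and> is_witness f \<omega> W"
    using kn by (auto simp: knowable_def finitary_def I_def)
  have s: "space M - Gs f n \<in> sets M" using Gs_sets by auto
  have "AE \<omega> in M. ennreal (real n powr p) * indicator (space M - Gs f n) \<omega> \<le> ennreal (real (maxi (Wf f \<omega>)) powr p)"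
    using AEf AE_space
  proof eventually_elim
    case (elim \<omega>)
    show ?case
    proof (cases "\<omega> \<in> Gs f n")
      case True then show ?thesis by simp
    next
      case False
      then have "n \<le> maxi (Wf f \<omega>)" using bad_maxi elim by blast
      then have "real n powr p \<le> real (maxi (Wf f \<omega>)) powr p" using p by (intro powr_mono2) auto
      then show ?thesis using False elim by (simp add: ennreal_leI)
    qed
  qed
  then have "(\<integral>\<^sup>+\<omega>. ennreal (real n powr p) * indicator (space M - Gs f n) \<omega> \<partial>M) \<le> I"
    unfolding I_def by (rule nn_integral_mono_AE)
  then have "ennreal (real n powr p) * emeasure M (space M - Gs f n) \<le> I"
    by (simp add: nn_integral_cmult_indicator[OF s])
  then have "ennreal (real n powr p * eps n) \<le> ennreal (enn2real I)"
    using finI by (simp add: M.emeasure_eq_measure eps_def ennreal_mult'')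
  then have "real n powr p * eps n \<le> enn2real I" by (simp add: ennreal_le_iff)
  moreover have "0 < real n powr p" using n by simp
  ultimately have "eps n \<le> enn2real I / real n powr p" by (simp add: field_simps)
  then show ?thesis by (simp add: I_def powr_minus divide_inverse)
qed

end

lemma sum_dom:
  fixes c :: "nat \<Rightarrow> nat \<Rightarrow> real" and c' d :: "nat \<Rightarrow> real"
  assumes lim: "\<And>k. (\<lambda>n. c n k) \<longlonglongrightarrow> c' k" and nn: "\<And>n k. 0 \<le> c n k"
    and le: "\<And>n k. c n k \<le> d k" and sd: "summable d"
  shows "(\<lambda>n. \<Sum>k. ennreal (c n k)) \<longlonglongrightarrow> (\<Sum>k. ennreal (c' k))"
proof -
  have d0: "0 \<le> d k" for k using nn[of 0 k] le[of 0 k] by linarith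
  have "(\<lambda>n. \<integral>\<^sup>+k. ennreal (c n k) \<partial>count_space UNIV) \<longlonglongrightarrow> (\<integral>\<^sup>+k. ennreal (c' k) \<partial>count_space UNIV)"
  proof (rule nn_integral_dominated_convergence[where w="\<lambda>k. ennreal (d k)"])
    show "AE k in count_space UNIV. ennreal (c j k) \<le> ennreal (d k)" for j
      by (intro AE_I2 ennreal_leI le)
    have "(\<integral>\<^sup>+k. ennreal (d k) \<partial>count_space UNIV) = ennreal (suminf d)"
      by (simp add: nn_integral_count_space_nat suminf_ennreal2 d0 sd)
    then show "(\<integral>\<^sup>+k. ennreal (d k) \<partial>count_space UNIV) < \<infinity>" by simp
    show "AE k in count_space UNIV. (\<lambda>n. ennreal (c n k)) \<longlonglongrightarrow> ennreal (c' k)"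
      by (intro AE_I2 tendsto_ennrealI lim)
  qed auto
  then show ?thesis by (simp add: nn_integral_count_space_nat)
qed

lemma eps_summable:
  assumes fm: "f \<in> M \<rightarrow>\<^sub>M count_space Omega" and kn: "knowable p f" and p: "0 < p"
    and q: "q * p > 1" and q1: "q = 1 \<or> q = 2"
  shows "summable (\<lambda>k. (eps f k) ^ (if q = 1 then 1 else 2))"
proof -
  define K where "K = enn2real (\<integral>\<^sup>+\<omega>. ennreal (real (maxi (Wf f \<omega>)) powr p) \<partial>M)"
  have K0: "0 \<le> K" by (simp add: K_def)
  have mk: "k \<ge> 1 \<Longrightarrow> eps f k \<le> K * real k powr (-p)" for k
    using markov[OF fm kn p, of k] by (simp add: K_def)
  show ?thesis
  proof (cases "q = 1")
    case True
    have "summable (\<lambda>k. K * real k powr (-p))"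
      using True q by (intro summable_mult) (simp add: summable_real_powr_iff)
    then show ?thesis
      by (rule summable_comparison_test'[where N=1]) (use True mk eps_nonneg[OF fm] in auto)
  next
    case False
    then have q2: "q = 2" using q1 by simp
    have S: "summable (\<lambda>k. K^2 * real k powr (-p + -p))"
      using q2 q by (intro summable_mult) (simp add: summable_real_powr_iff)
    have Bd: "(eps f k)^2 \<le> K^2 * real k powr (-p + -p)" if "k \<ge> 1" for k
    proof -
      have "(eps f k)^2 \<le> (K * real k powr (-p))^2"
        using mk[OF that] eps_nonneg[OF fm] by (intro power_mono) auto
      also have "\<dots> = K^2 * (real k powr (-p) * real k powr (-p))"
        by (simp add: power2_eq_square)
      also have "\<dots> = K^2 * real k powr (-p + -p)"
        by (simp only: powr_add)
      finally show ?thesis .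
    qed
    have "summable (\<lambda>k. (eps f k)^2)"
      by (rule summable_comparison_test'[OF S, where N=1]) (use Bd in force)
    then show ?thesis using False by simp
  qed
qed

theorem mainTheorem13:
  fixes f :: "(nat \<Rightarrow> int) \<Rightarrow> int"
  assumes "boolean_function f" and "finitary f"
  shows "(\<forall>k. (\<lambda>n. infl (B n f) k) \<longlonglongrightarrow> infl f k)
     \<and> ((\<exists>p::real. p > 1/2 \<and> knowable p f) \<longrightarrow> (\<lambda>n. H (B n f)) \<longlonglongrightarrow> H f)
     \<and> ((\<exists>p::real. p > 1 \<and> knowable p f) \<longrightarrow> (\<lambda>n. total_infl (B n f)) \<longlonglongrightarrow> total_infl f)"
proof -
  have fm: "f \<in> M \<rightarrow>\<^sub>M count_space Omega" using assms(1) by (simp add: boolean_function_def)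
  define a where "a n k = infl (B n f) k" for n k
  define b where "b k = infl f k" for k
  have a0: "0 \<le> a n k" for n k by (simp add: a_def infl_def)
  have epl: "eps f \<longlonglongrightarrow> 0" by (rule eps_lim[OF fm assms(2)])
  have alim: "(\<lambda>n. a n k) \<longlonglongrightarrow> b k" for k
  proof -
    have "(\<lambda>n. a n k - b k) \<longlonglongrightarrow> 0"
    proof (rule Lim_null_comparison)
      show "\<forall>\<^sub>F n in sequentially. norm (a n k - b k) \<le> 2 * eps f n"
        using infl_diff[OF fm] by (simp add: a_def b_def)
      show "(\<lambda>n. 2 * eps f n) \<longlonglongrightarrow> 0" using tendsto_mult[OF tendsto_const epl, of 2] by simp
    qed
    then show ?thesis by (simp add: LIM_zero_iff)
  qed
  have abound: "a n k \<le> 3 * eps f k" for n k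
  proof (cases "n \<le> k")
    case True then show ?thesis using infl_zero[OF fm True] eps_nonneg[OF fm] by (simp add: a_def)
  next
    case False
    have "a n k \<le> b k + 2 * eps f n" using infl_diff[OF fm, of n k] by (simp add: a_def b_def abs_le_iff)
    moreover have "b k \<le> eps f k" by (simp add: b_def infl_f_le[OF fm])
    moreover have "eps f n \<le> eps f k" using False by (intro eps_mono[OF fm]) auto
    ultimately show ?thesis by linarith
  qed
  show ?thesis
  proof (intro conjI allI impI)
    fix k show "(\<lambda>n. infl (B n f) k) \<longlonglongrightarrow> infl f k" using alim by (simp add: a_def b_def)
  next
    assume "\<exists>p. p > 1/2 \<and> knowable p f"
    then obtain p where p: "p > 1/2" "knowable p f" by blast
    have sd: "summable (\<lambda>k. (eps f k)^2)"
      using eps_summable[OF fm p(2), of 2] p(1) by simp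
    have "(\<lambda>n. \<Sum>k. ennreal ((a n k)^2)) \<longlonglongrightarrow> (\<Sum>k. ennreal ((b k)^2))"
    proof (rule sum_dom[where d="\<lambda>k. 9 * (eps f k)^2"])
      show "(\<lambda>n. (a n k)^2) \<longlonglongrightarrow> (b k)^2" for k by (intro tendsto_power alim)
      show "(a n k)^2 \<le> 9 * (eps f k)^2" for n k
      proof -
        have "(a n k)^2 \<le> (3 * eps f k)^2" using abound a0 by (intro power_mono) auto
        then show ?thesis by (simp add: power_mult_distrib)
      qed
      show "summable (\<lambda>k. 9 * (eps f k)^2)" using sd by (rule summable_mult)
    qed simp
    then show "(\<lambda>n. H (B n f)) \<longlonglongrightarrow> H f" by (simp add: H_def a_def b_def)
  next
    assume "\<exists>p. p > 1 \<and> knowable p f"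
    then obtain p where p: "p > 1" "knowable p f" by blast
    have sd: "summable (\<lambda>k. eps f k)"
      using eps_summable[OF fm p(2), of 1] p(1) by simp
    have "(\<lambda>n. \<Sum>k. ennreal (a n k)) \<longlonglongrightarrow> (\<Sum>k. ennreal (b k))"
    proof (rule sum_dom[where d="\<lambda>k. 3 * eps f k"])
      show "(\<lambda>n. a n k) \<longlonglongrightarrow> b k" for k by (rule alim)
      show "a n k \<le> 3 * eps f k" for n k by (rule abound)
      show "summable (\<lambda>k. 3 * eps f k)" using sd by (rule summable_mult)
    qed (rule a0)
    then show "(\<lambda>n. total_infl (B n f)) \<longlonglongrightarrow> total_infl f" by (simp add: total_infl_def a_def b_def)
  qed
qed

end
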